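(* Let $a:\mathbb{C}\to\mathbb{C}$ be an entire holomorphic function with $a(w)\neq 0$ for every $w\in\mathbb{C}$. Let $c=\alpha+i\beta\in\mathbb{C}\setminus\{0,1,-1\}$ with $\alpha^2+\beta^2\neq 1$, put $b(w)=c/a(w)$, and let $X_0\in\mathbb{R}^4$. Define, for $w=u+iv\in\mathbb{C}$, $$f(w)=X_0+2\,\mathrm{Re}\int_0^w\Big(a(\xi)+\frac{c}{a(\xi)},\;1+c,\;i(1-c),\;a(\xi)-\frac{c}{a(\xi)}\Big)\,d\xi .$$ Then $f$ is a conformal (isothermic) minimal spacelike immersion of $\mathbb{C}$ into $\mathbb{R}^4_1$ (with $f_w=W(a,b)$, i.e. $\mu\equiv 1$). The coordinates $x=f^1-X_0^1=2[(1+\alpha)u-\beta v]$, $y=f^2-X_0^2=2[\beta u+(\alpha-1)v]$ define a linear bijection $(u,v)\mapsto(x,y)$ of $\mathbb{R}^2$ (equivalently $x_w=1+c$, $y_w=i(1-c)$), so that $f(\mathbb{C})$ is an entire graph of first type, i.e. $f(\mathbb{C})=\{(A(x,y),\,x+X_0^1,\,y+X_0^2,\,B(x,y)):(x,y)\in\mathbb{R}^2\}$ for smooth real functions $A,B$ on $\mathbb{R}^2$. Moreover, if $a$ is not constant, then there is a point of the surface at which the Gauss curvature is nonzero, and $f(\mathbb{C})$ is not contained in any affine hyperplane of $\mathbb{R}^4_1$.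
   Context: $\mathbb{R}^4_1$ is $\mathbb{R}^4$ with the Lorentzian product $\langle (a_0,a_1,a_2,a_3),(b_0,b_1,b_2,b_3)\rangle=-a_0b_0+a_1b_1+a_2b_2+a_3b_3$, extended complex-bilinearly to $\mathbb{C}^4$. A surface is spacelike if its induced metric is positive definite. For a map $f$ of a domain of $\mathbb{C}$ with parameter $w=u+iv$, $f_w=\tfrac12(f_u-if_v)$; $f$ is conformal (isothermic) if $\langle f_w,f_w\rangle=0$ and $\langle f_w,\overline{f_w}\rangle=\lambda^2/2>0$, in which case the induced metric is $\lambda^2|dw|^2$ and the Gauss curvature is $K=-\lambda^{-2}\Delta\ln\lambda$ with $\Delta=\partial_u^2+\partial_v^2$. For complex functions $a,b$ put $W(a,b)=(a+b,\,1+ab,\,i(1-ab),\,a-b)$. A surface is minimal if its mean curvature vector vanishes, equivalently each coordinate function is harmonic for the induced metric. A graph of first type is a surface $\{(A(x,y),x,y,B(x,y))\}$. *)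

theory Defs
  imports "HOL-Complex_Analysis.Complex_Analysis"
begin

text \<open>Vectors of R^4 / C^4 are of type real^4 / complex^4; the paper's coordinates
  0,1,2,3 correspond to the Isabelle indices 1,2,3,4.\<close>

definition lorentz :: "'a::comm_ring ^ 4 \<Rightarrow> 'a ^ 4 \<Rightarrow> 'a" where
  "lorentz x y = - (x$1 * y$1) + x$2 * y$2 + x$3 * y$3 + x$4 * y$4"

definition cnjv :: "complex ^ 4 \<Rightarrow> complex ^ 4" where
  "cnjv x = (\<chi> k. cnj (x$k))"

definition Wv :: "complex \<Rightarrow> complex \<Rightarrow> complex ^ 4" where
  "Wv a b = vector [a + b, 1 + a * b, \<i> * (1 - a * b), a - b]"

definition pu :: "(complex \<Rightarrow> real) \<Rightarrow> complex \<Rightarrow> real" where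
  "pu g w = deriv (\<lambda>t::real. g (w + of_real t)) 0"

definition pv :: "(complex \<Rightarrow> real) \<Rightarrow> complex \<Rightarrow> real" where
  "pv g w = deriv (\<lambda>t::real. g (w + \<i> * of_real t)) 0"

fun ipd :: "bool list \<Rightarrow> (complex \<Rightarrow> real) \<Rightarrow> complex \<Rightarrow> real" where
  "ipd [] g = g"
| "ipd (d # ds) g = (if d then pu else pv) (ipd ds g)"

definition smooth_fun :: "(complex \<Rightarrow> real) \<Rightarrow> bool" where
  "smooth_fun g \<longleftrightarrow> (\<forall>ds w. ipd ds g differentiable (at w))"

definition smooth_map :: "(complex \<Rightarrow> real ^ 4) \<Rightarrow> bool" where
  "smooth_map f \<longleftrightarrow> (\<forall>k. smooth_fun (\<lambda>z. f z $ k))"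

definition fu :: "(complex \<Rightarrow> real ^ 4) \<Rightarrow> complex \<Rightarrow> real ^ 4" where
  "fu f w = (\<chi> k. pu (\<lambda>z. f z $ k) w)"

definition fv :: "(complex \<Rightarrow> real ^ 4) \<Rightarrow> complex \<Rightarrow> real ^ 4" where
  "fv f w = (\<chi> k. pv (\<lambda>z. f z $ k) w)"

definition fw :: "(complex \<Rightarrow> real ^ 4) \<Rightarrow> complex \<Rightarrow> complex ^ 4" where
  "fw f w = (\<chi> k. (complex_of_real (fu f w $ k) - \<i> * complex_of_real (fv f w $ k)) / 2)"

definition gE :: "(complex \<Rightarrow> real ^ 4) \<Rightarrow> complex \<Rightarrow> real" where
  "gE f w = lorentz (fu f w) (fu f w)"
definition gF :: "(complex \<Rightarrow> real ^ 4) \<Rightarrow> complex \<Rightarrow> real" where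
  "gF f w = lorentz (fu f w) (fv f w)"
definition gG :: "(complex \<Rightarrow> real ^ 4) \<Rightarrow> complex \<Rightarrow> real" where
  "gG f w = lorentz (fv f w) (fv f w)"
definition gD :: "(complex \<Rightarrow> real ^ 4) \<Rightarrow> complex \<Rightarrow> real" where
  "gD f w = gE f w * gG f w - (gF f w)^2"

definition spacelike_immersion :: "(complex \<Rightarrow> real ^ 4) \<Rightarrow> bool" where
  "spacelike_immersion f \<longleftrightarrow> smooth_map f \<and> (\<forall>w. gE f w > 0 \<and> gD f w > 0)"

definition conformal :: "(complex \<Rightarrow> real ^ 4) \<Rightarrow> bool" where
  "conformal f \<longleftrightarrow> (\<forall>w. lorentz (fw f w) (fw f w) = 0 \<and>
      (\<exists>l::real. l > 0 \<and> lorentz (fw f w) (cnjv (fw f w)) = complex_of_real (l^2 / 2)))"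

definition laplace_beltrami :: "(complex \<Rightarrow> real ^ 4) \<Rightarrow> (complex \<Rightarrow> real) \<Rightarrow> complex \<Rightarrow> real" where
  "laplace_beltrami f h w =
     (pu (\<lambda>z. sqrt (gD f z) * (gG f z * pu h z - gF f z * pv h z) / gD f z) w
    + pv (\<lambda>z. sqrt (gD f z) * (gE f z * pv h z - gF f z * pu h z) / gD f z) w) / sqrt (gD f w)"

definition minimal :: "(complex \<Rightarrow> real ^ 4) \<Rightarrow> bool" where
  "minimal f \<longleftrightarrow> (\<forall>k w. laplace_beltrami f (\<lambda>z. f z $ k) w = 0)"

definition conf_factor :: "(complex \<Rightarrow> real ^ 4) \<Rightarrow> complex \<Rightarrow> real" where
  "conf_factor f w = sqrt (2 * Re (lorentz (fw f w) (cnjv (fw f w))))"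

definition gauss_curv :: "(complex \<Rightarrow> real ^ 4) \<Rightarrow> complex \<Rightarrow> real" where
  "gauss_curv f w = - (pu (pu (\<lambda>z. ln (conf_factor f z))) w
                      + pv (pv (\<lambda>z. ln (conf_factor f z))) w) / (conf_factor f w)^2"

end

theory Submission
  imports Defs
begin


lemma vector4 [simp]:
 "(vector [x1,x2,x3,x4] ::('a::zero)^4)$1 = x1"
 "(vector [x1,x2,x3,x4] ::('a::zero)^4)$2 = x2"
 "(vector [x1,x2,x3,x4] ::('a::zero)^4)$3 = x3"
 "(vector [x1,x2,x3,x4] ::('a::zero)^4)$4 = x4"
  unfolding vector_def by simp_all

definition ldu :: "(complex \<Rightarrow> real) \<Rightarrow> complex \<Rightarrow> real \<Rightarrow> bool" where
  "ldu g w d \<longleftrightarrow> ((\<lambda>t::real. g (w + of_real t)) has_real_derivative d) (at 0)"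
definition ldv :: "(complex \<Rightarrow> real) \<Rightarrow> complex \<Rightarrow> real \<Rightarrow> bool" where
  "ldv g w d \<longleftrightarrow> ((\<lambda>t::real. g (w + \<i> * of_real t)) has_real_derivative d) (at 0)"

lemma ldu_pu: "ldu g w d \<Longrightarrow> pu g w = d"
  unfolding ldu_def pu_def by (rule DERIV_imp_deriv)
lemma ldv_pv: "ldv g w d \<Longrightarrow> pv g w = d"
  unfolding ldv_def pv_def by (rule DERIV_imp_deriv)

lemma ldu_chain: "ldu g w d \<Longrightarrow> (\<phi> has_real_derivative \<phi>') (at (g w)) \<Longrightarrow> ldu (\<lambda>z. \<phi> (g z)) w (\<phi>' * d)"
  unfolding ldu_def by (rule DERIV_chain2) simp_all
lemma ldv_chain: "ldv g w d \<Longrightarrow> (\<phi> has_real_derivative \<phi>') (at (g w)) \<Longrightarrow> ldv (\<lambda>z. \<phi> (g z)) w (\<phi>' * d)"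
  unfolding ldv_def by (rule DERIV_chain2) simp_all
lemma ldu_mult: "ldu g1 w d1 \<Longrightarrow> ldu g2 w d2 \<Longrightarrow> ldu (\<lambda>z. g1 z * g2 z) w (d1 * g2 w + g1 w * d2)"
  unfolding ldu_def by (drule (1) DERIV_mult) (simp add: mult.commute)
lemma ldv_mult: "ldv g1 w d1 \<Longrightarrow> ldv g2 w d2 \<Longrightarrow> ldv (\<lambda>z. g1 z * g2 z) w (d1 * g2 w + g1 w * d2)"
  unfolding ldv_def by (drule (1) DERIV_mult) (simp add: mult.commute)

lemma hol_line_u:
  assumes "H holomorphic_on UNIV"
  shows "((\<lambda>t::real. H (w + of_real t)) has_vector_derivative deriv H w) (at 0)"
proof -
  have d: "(H has_field_derivative deriv H w) (at w)"
    using assms by (meson DERIV_deriv_iff_field_differentiable UNIV_I holomorphic_on_imp_differentiable_at open_UNIV)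
  have l: "((\<lambda>t::real. w + of_real t) has_vector_derivative 1) (at 0)"
    by (auto intro!: derivative_eq_intros)
  from field_vector_diff_chain_at[OF l, of H] d show ?thesis by (simp add: o_def)
qed

lemma hol_line_v:
  assumes "H holomorphic_on UNIV"
  shows "((\<lambda>t::real. H (w + \<i> * of_real t)) has_vector_derivative \<i> * deriv H w) (at 0)"
proof -
  have d: "(H has_field_derivative deriv H w) (at w)"
    using assms by (meson DERIV_deriv_iff_field_differentiable UNIV_I holomorphic_on_imp_differentiable_at open_UNIV)
  have l: "((\<lambda>t::real. w + \<i> * of_real t) has_vector_derivative \<i>) (at 0)"
    by (auto intro!: derivative_eq_intros)
  from field_vector_diff_chain_at[OF l, of H] d show ?thesis by (simp add: o_def)
qed

lemma ldu_Re: "H holomorphic_on UNIV \<Longrightarrow> ldu (\<lambda>z. Re (H z)) w (Re (deriv H w))"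
  unfolding ldu_def using hol_line_u[of H w] has_vector_derivative_complex_iff by fastforce
lemma ldu_Im: "H holomorphic_on UNIV \<Longrightarrow> ldu (\<lambda>z. Im (H z)) w (Im (deriv H w))"
  unfolding ldu_def using hol_line_u[of H w] has_vector_derivative_complex_iff by fastforce
lemma ldv_Re: "H holomorphic_on UNIV \<Longrightarrow> ldv (\<lambda>z. Re (H z)) w (- Im (deriv H w))"
  unfolding ldv_def using hol_line_v[of H w] has_vector_derivative_complex_iff by fastforce
lemma ldv_Im: "H holomorphic_on UNIV \<Longrightarrow> ldv (\<lambda>z. Im (H z)) w (Re (deriv H w))"
  unfolding ldv_def using hol_line_v[of H w] has_vector_derivative_complex_iff by fastforce

lemma pu_Re: "H holomorphic_on UNIV \<Longrightarrow> pu (\<lambda>z. Re (H z)) = (\<lambda>z. Re (deriv H z))"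
  by (rule ext, rule ldu_pu, rule ldu_Re)
lemma pv_Re: "H holomorphic_on UNIV \<Longrightarrow> pv (\<lambda>z. Re (H z)) = (\<lambda>z. - Im (deriv H z))"
  by (rule ext, rule ldv_pv, rule ldv_Re)
lemma pu_Im: "H holomorphic_on UNIV \<Longrightarrow> pu (\<lambda>z. Im (H z)) = (\<lambda>z. Im (deriv H z))"
  by (rule ext, rule ldu_pu, rule ldu_Im)
lemma pv_Im: "H holomorphic_on UNIV \<Longrightarrow> pv (\<lambda>z. Im (H z)) = (\<lambda>z. Re (deriv H z))"
  by (rule ext, rule ldv_pv, rule ldv_Im)




definition Lpq :: "complex \<Rightarrow> complex \<Rightarrow> complex \<Rightarrow> complex" where
  "Lpq p q z = p * of_real (Re z) + q * of_real (Im z)"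

lemma Lpq_u: "Lpq p q (w + of_real t) = Lpq p q w + p * of_real t"
  by (simp add: Lpq_def algebra_simps)
lemma Lpq_v: "Lpq p q (w + \<i> * of_real t) = Lpq p q w + q * of_real t"
  by (simp add: Lpq_def algebra_simps)
lemma Lpq_id: "Lpq 1 \<i> z = z"
  by (simp add: Lpq_def complex_eq_iff)

lemma hol_line_gen:
  assumes "H holomorphic_on UNIV"
  shows "((\<lambda>t::real. H (x + p * of_real t)) has_vector_derivative p * deriv H x) (at 0)"
proof -
  have d: "(H has_field_derivative deriv H x) (at x)"
    using assms by (meson DERIV_deriv_iff_field_differentiable UNIV_I holomorphic_on_imp_differentiable_at open_UNIV)
  have l: "((\<lambda>t::real. x + p * of_real t) has_vector_derivative p) (at 0)"
    by (auto intro!: derivative_eq_intros)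
  from field_vector_diff_chain_at[OF l, of H] d show ?thesis by (simp add: o_def)
qed

lemma pu_ReL: "H holomorphic_on UNIV \<Longrightarrow> pu (\<lambda>z. Re (H (Lpq p q z))) = (\<lambda>z. Re (p * deriv H (Lpq p q z)))"
  apply (rule ext, rule ldu_pu)
  unfolding ldu_def Lpq_u using hol_line_gen[of H "Lpq p q _" p] has_vector_derivative_complex_iff by fastforce
lemma pv_ReL: "H holomorphic_on UNIV \<Longrightarrow> pv (\<lambda>z. Re (H (Lpq p q z))) = (\<lambda>z. Re (q * deriv H (Lpq p q z)))"
  apply (rule ext, rule ldv_pv)
  unfolding ldv_def Lpq_v using hol_line_gen[of H "Lpq p q _" q] has_vector_derivative_complex_iff by fastforce

lemma ipd_shape:
  assumes "G holomorphic_on UNIV"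
  shows "\<exists>H. H holomorphic_on UNIV \<and> ipd ds (\<lambda>z. Re (G (Lpq p q z))) = (\<lambda>z. Re (H (Lpq p q z)))"
proof (induction ds)
  case Nil
  then show ?case using assms by auto
next
  case (Cons d ds)
  then obtain H where H: "H holomorphic_on UNIV" "ipd ds (\<lambda>z. Re (G (Lpq p q z))) = (\<lambda>z. Re (H (Lpq p q z)))"
    by blast
  have hd: "deriv H holomorphic_on UNIV" using H(1) by (simp add: holomorphic_deriv)
  show ?case
  proof (cases d)
    case True
    then show ?thesis using H hd pu_ReL[OF H(1), of p q]
      by (auto intro!: exI[of _ "\<lambda>z. p * deriv H z"] holomorphic_intros)
  next
    case False
    then show ?thesis using H hd pv_ReL[OF H(1), of p q]
      by (auto intro!: exI[of _ "\<lambda>z. q * deriv H z"] holomorphic_intros)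
  qed
qed

lemma diff_ReL:
  assumes "H holomorphic_on UNIV"
  shows "(\<lambda>z. Re (H (Lpq p q z))) differentiable (at w)"
proof -
  have hL: "(Lpq p q has_derivative Lpq p q) (at w)"
    unfolding Lpq_def by (auto intro!: derivative_eq_intros)
  have "(H has_field_derivative deriv H (Lpq p q w)) (at (Lpq p q w))"
    using assms by (meson DERIV_deriv_iff_field_differentiable UNIV_I holomorphic_on_imp_differentiable_at open_UNIV)
  then have hH: "(H has_derivative (\<lambda>h. deriv H (Lpq p q w) * h)) (at (Lpq p q w))"
    by (simp add: has_field_derivative_def)
  have "((\<lambda>z. H (Lpq p q z)) has_derivative (\<lambda>h. deriv H (Lpq p q w) * Lpq p q h)) (at w)"
    using has_derivative_compose[OF hL hH] by (simp add: o_def)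
  then have "((\<lambda>z. Re (H (Lpq p q z))) has_derivative (\<lambda>h. Re (deriv H (Lpq p q w) * Lpq p q h))) (at w)"
    by (rule has_derivative_Re)
  then show ?thesis unfolding differentiable_def by blast
qed

lemma smooth_ReL: "G holomorphic_on UNIV \<Longrightarrow> smooth_fun (\<lambda>z. Re (G (Lpq p q z)))"
  unfolding smooth_fun_def using ipd_shape diff_ReL by metis

lemma smooth_Re: "G holomorphic_on UNIV \<Longrightarrow> smooth_fun (\<lambda>z. Re (G z))"
  using smooth_ReL[of G 1 \<i>] by (simp add: Lpq_id)




lemma prim_ex:
  assumes "h holomorphic_on UNIV"
  shows "\<exists>P. P holomorphic_on UNIV \<and> (\<forall>w. deriv P w = h w) \<and> (\<forall>w. contour_integral (linepath 0 w) h = P w - P 0)"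
proof -
  obtain P where P: "\<And>x. (P has_field_derivative h x) (at x)"
    using holomorphic_convex_primitive'[of UNIV h] assms by auto
  have "P holomorphic_on UNIV"
    using P holomorphic_on_def field_differentiable_def field_differentiable_at_within by blast
  moreover have "\<forall>w. deriv P w = h w" using P DERIV_imp_deriv by blast
  moreover have "\<forall>w. contour_integral (linepath 0 w) h = P w - P 0"
  proof
    fix w
    have "(h has_contour_integral (P (pathfinish (linepath 0 w)) - P (pathstart (linepath 0 w)))) (linepath 0 w)"
      using P by (intro contour_integral_primitive[of UNIV]) (auto simp del: linepath_0)
    then show "contour_integral (linepath 0 w) h = P w - P 0"
      using contour_integral_unique by fastforce
  qed
  ultimately show ?thesis by blast
qed

locale setting =
  fixes a :: "complex \<Rightarrow> complex" and c :: complex and X0 :: "real ^ 4"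
    and f :: "complex \<Rightarrow> real ^ 4"
  assumes a_entire: "a holomorphic_on UNIV"
    and a_nz: "\<forall>w. a w \<noteq> 0"
    and c_ne: "c \<notin> {0, 1, -1}"
    and c_abs: "(Re c)^2 + (Im c)^2 \<noteq> 1"
    and f_def: "\<forall>w. f w = X0 + 2 *\<^sub>R (\<chi> k. Re (contour_integral (linepath 0 w)
                 (\<lambda>\<xi>. (vector [a \<xi> + c / a \<xi>, 1 + c, \<i> * (1 - c), a \<xi> - c / a \<xi>] :: complex ^ 4) $ k)))"
begin

definition hk :: "4 \<Rightarrow> complex \<Rightarrow> complex" where
  "hk k \<xi> = (vector [a \<xi> + c / a \<xi>, 1 + c, \<i> * (1 - c), a \<xi> - c / a \<xi>] :: complex ^ 4) $ k"

lemma hk_hol: "hk k holomorphic_on UNIV"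
proof -
  have "(\<lambda>\<xi>. c / a \<xi>) holomorphic_on UNIV" using a_entire a_nz by (auto intro!: holomorphic_intros)
  then show ?thesis using exhaust_4[of k] a_entire unfolding hk_def
    by (auto intro!: holomorphic_intros)
qed

definition PP :: "4 \<Rightarrow> complex \<Rightarrow> complex" where
  "PP = (SOME P. \<forall>k. P k holomorphic_on UNIV \<and> (\<forall>w. deriv (P k) w = hk k w) \<and> (\<forall>w. contour_integral (linepath 0 w) (hk k) = P k w - P k 0))"

lemma PP_prop: "PP k holomorphic_on UNIV \<and> (\<forall>w. deriv (PP k) w = hk k w) \<and> (\<forall>w. contour_integral (linepath 0 w) (hk k) = PP k w - PP k 0)"
proof -
  have "\<forall>k. \<exists>P. P holomorphic_on UNIV \<and> (\<forall>w. deriv P w = hk k w) \<and> (\<forall>w. contour_integral (linepath 0 w) (hk k) = P w - P 0)"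
    using prim_ex hk_hol by blast
  then have "\<exists>P. \<forall>k. P k holomorphic_on UNIV \<and> (\<forall>w. deriv (P k) w = hk k w) \<and> (\<forall>w. contour_integral (linepath 0 w) (hk k) = P k w - P k 0)"
    by (rule choice)
  from someI_ex[OF this] show ?thesis unfolding PP_def by blast
qed

definition GG :: "4 \<Rightarrow> complex \<Rightarrow> complex" where
  "GG k z = of_real (X0 $ k) + 2 * (PP k z - PP k 0)"

lemma GG_hol: "GG k holomorphic_on UNIV"
  unfolding GG_def using PP_prop by (auto intro!: holomorphic_intros)

lemma dGG: "deriv (GG k) z = 2 * hk k z"
proof -
  have "(PP k has_field_derivative hk k z) (at z)"
    using PP_prop by (metis DERIV_deriv_iff_field_differentiable UNIV_I holomorphic_on_imp_differentiable_at open_UNIV)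
  then have "(GG k has_field_derivative 2 * hk k z) (at z)"
    unfolding GG_def by (auto intro!: derivative_eq_intros)
  then show ?thesis by (rule DERIV_imp_deriv)
qed

lemma dGG_hol: "deriv (GG k) holomorphic_on UNIV"
  using GG_hol holomorphic_deriv by blast

lemma f_comp: "f z $ k = Re (GG k z)"
  using f_def PP_prop unfolding GG_def hk_def by simp

lemma f_comp_fun: "(\<lambda>z. f z $ k) = (\<lambda>z. Re (GG k z))"
  using f_comp by auto

end



lemma lorentz_Wv: "lorentz (Wv A B) (Wv A B) = 0"
  unfolding lorentz_def Wv_def by (simp add: algebra_simps power2_eq_square)

lemma lorentz_Wv_cnj: "lorentz (Wv A B) (cnjv (Wv A B)) = of_real (2 + 2 * (cmod (A*B))^2 - 4 * Re (A * cnj B))"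
proof -
  have e: "(cmod (A*B))^2 = ((Re A)^2 + (Im A)^2)*((Re B)^2+(Im B)^2)"
    by (simp add: norm_mult power_mult_distrib cmod_power2)
  show ?thesis unfolding lorentz_def Wv_def cnjv_def e
    by (simp add: complex_eq_iff algebra_simps power2_eq_square)
qed

lemma UV_lemma:
  fixes W :: "complex ^ 4"
  assumes "lorentz W W = 0"
  defines "U \<equiv> (\<chi> k. 2 * Re (W $ k))" and "V \<equiv> (\<chi> k. - (2 * Im (W $ k)))"
  shows "lorentz U U = 2 * Re (lorentz W (cnjv W))" "lorentz V V = 2 * Re (lorentz W (cnjv W))"
    "lorentz U V = 0"
proof -
  from assms(1) have r: "Re (lorentz W W) = 0" and i: "Im (lorentz W W) = 0" by simp_all
  show "lorentz U U = 2 * Re (lorentz W (cnjv W))" using r unfolding U_def lorentz_def cnjv_def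
    by (simp add: algebra_simps power2_eq_square)
  show "lorentz V V = 2 * Re (lorentz W (cnjv W))" using r unfolding V_def lorentz_def cnjv_def
    by (simp add: algebra_simps power2_eq_square)
  show "lorentz U V = 0" using i unfolding U_def V_def lorentz_def
    by (simp add: algebra_simps power2_eq_square)
qed

context setting begin

lemma fu_eq: "fu f w = (\<chi> k. 2 * Re (hk k w))"
  unfolding fu_def f_comp_fun pu_Re[OF GG_hol] dGG by simp

lemma fv_eq: "fv f w = (\<chi> k. - (2 * Im (hk k w)))"
  unfolding fv_def f_comp_fun pv_Re[OF GG_hol] dGG by simp

lemma fw_hk: "fw f w = (\<chi> k. hk k w)"
  unfolding fw_def fu_eq fv_eq by (simp add: vec_eq_iff complex_eq_iff)

lemma fw_eq: "fw f w = Wv (a w) (c / a w)"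
  unfolding fw_hk Wv_def using a_nz
  by (simp add: vec_eq_iff forall_4 hk_def)

lemma smooth_f: "smooth_map f"
  unfolding smooth_map_def f_comp_fun using smooth_Re GG_hol by blast

definition Rv :: "complex \<Rightarrow> real" where
  "Rv w = Re (lorentz (fw f w) (cnjv (fw f w)))"

lemma Rv_eq: "Rv w = 2 + 2 * (cmod c)^2 - 4 * Re (a w * cnj (c / a w))"
  unfolding Rv_def fw_eq lorentz_Wv_cnj using a_nz by simp

lemma lor_cnj: "lorentz (fw f w) (cnjv (fw f w)) = of_real (Rv w)"
  unfolding Rv_def fw_eq lorentz_Wv_cnj by simp

lemma lor_fw: "lorentz (fw f w) (fw f w) = 0"
  unfolding fw_eq by (rule lorentz_Wv)

lemma Rv_pos: "Rv w > 0"
proof -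
  define r where "r = cmod c"
  have r1: "r \<noteq> 1" using c_abs unfolding r_def by (metis cmod_power2 power_one)
  have "Re (a w * cnj (c / a w)) \<le> cmod (a w * cnj (c / a w))" by (rule complex_Re_le_cmod)
  also have "\<dots> = r" using a_nz unfolding r_def by (simp add: norm_mult norm_divide)
  finally have "Re (a w * cnj (c / a w)) \<le> r" .
  then have "Rv w \<ge> 2 * (r - 1)^2" unfolding Rv_eq r_def[symmetric] by (simp add: power2_eq_square algebra_simps)
  moreover have "(r - 1)^2 > 0" using r1 by simp
  ultimately show ?thesis by linarith
qed

lemma conformal_f: "conformal f"
  unfolding conformal_def
proof (intro allI conjI)
  fix w
  show "lorentz (fw f w) (fw f w) = 0" by (rule lor_fw)
  show "\<exists>l>0. lorentz (fw f w) (cnjv (fw f w)) = complex_of_real (l\<^sup>2 / 2)"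
    using Rv_pos[of w] by (intro exI[of _ "sqrt (2 * Rv w)"]) (simp add: lor_cnj)
qed

lemma gE_eq: "gE f w = 2 * Rv w" and gG_eq: "gG f w = 2 * Rv w" and gF_eq: "gF f w = 0"
proof -
  have fu': "fu f w = (\<chi> k. 2 * Re (fw f w $ k))" by (simp add: fu_eq fw_hk)
  have fv': "fv f w = (\<chi> k. - (2 * Im (fw f w $ k)))" by (simp add: fv_eq fw_hk)
  show "gE f w = 2 * Rv w" unfolding gE_def fu' Rv_def using UV_lemma(1)[OF lor_fw] by simp
  show "gG f w = 2 * Rv w" unfolding gG_def fv' Rv_def using UV_lemma(2)[OF lor_fw] by simp
  show "gF f w = 0" unfolding gF_def fu' fv' using UV_lemma(3)[OF lor_fw] by simp
qed

lemma gD_eq: "gD f w = 4 * (Rv w)^2"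
  unfolding gD_def gE_eq gG_eq gF_eq by (simp add: power2_eq_square)

lemma spacelike_f: "spacelike_immersion f"
  unfolding spacelike_immersion_def by (simp add: smooth_f gE_eq gD_eq) (metis Rv_pos order_less_irrefl)

end



lemma ldv_neg: "ldv g w d \<Longrightarrow> ldv (\<lambda>z. - g z) w (- d)"
  unfolding ldv_def by (rule DERIV_minus)

lemma pv_negIm: "H holomorphic_on UNIV \<Longrightarrow> pv (\<lambda>z. - Im (H z)) = (\<lambda>z. - Re (deriv H z))"
  by (rule ext, rule ldv_pv, rule ldv_neg, rule ldv_Im)

context setting begin

lemma minimal_f: "minimal f"
  unfolding minimal_def
proof (intro allI)
  fix k w
  define h where "h = (\<lambda>z. f z $ k)"
  have e1: "(\<lambda>z. sqrt (gD f z) * (gG f z * pu h z - gF f z * pv h z) / gD f z) = pu h"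
  proof
    fix z
    have R: "Rv z > 0" by (rule Rv_pos)
    have s: "sqrt (gD f z) = 2 * Rv z"
      unfolding gD_eq by (rule real_sqrt_unique) (use R in \<open>auto simp: power_mult_distrib\<close>)
    show "sqrt (gD f z) * (gG f z * pu h z - gF f z * pv h z) / gD f z = pu h z"
      unfolding s unfolding gD_eq gG_eq gF_eq using R by (simp add: power2_eq_square field_simps)
  qed
  have e2: "(\<lambda>z. sqrt (gD f z) * (gE f z * pv h z - gF f z * pu h z) / gD f z) = pv h"
  proof
    fix z
    have R: "Rv z > 0" by (rule Rv_pos)
    have s: "sqrt (gD f z) = 2 * Rv z"
      unfolding gD_eq by (rule real_sqrt_unique) (use R in \<open>auto simp: power_mult_distrib\<close>)
    show "sqrt (gD f z) * (gE f z * pv h z - gF f z * pu h z) / gD f z = pv h z"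
      unfolding s unfolding gD_eq gE_eq gF_eq using R by (simp add: power2_eq_square field_simps)
  qed
  have "pu (pu h) w + pv (pv h) w = 0"
    unfolding h_def f_comp_fun pu_Re[OF GG_hol] pv_Re[OF GG_hol] pu_Re[OF dGG_hol] pv_negIm[OF dGG_hol]
    by simp
  then show "laplace_beltrami f (\<lambda>z. f z $ k) w = 0"
    unfolding laplace_beltrami_def h_def[symmetric] e1 e2 by simp
qed

lemma f2: "f w $ 2 - X0 $ 2 = 2 * ((1 + Re c) * Re w - Im c * Im w)"
  using f_def by (simp add: algebra_simps)
lemma f3: "f w $ 3 - X0 $ 3 = 2 * (Im c * Re w + (Re c - 1) * Im w)"
  using f_def by (simp add: algebra_simps)

definition DD where "DD = (Re c)^2 + (Im c)^2 - 1"
lemma DD_nz: "DD \<noteq> 0" using c_abs unfolding DD_def by simp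

definition psi :: "real \<Rightarrow> real \<Rightarrow> complex" where
  "psi x y = Complex ((x * (Re c - 1) + Im c * y) / (2 * DD)) (((1 + Re c) * y - Im c * x) / (2 * DD))"

lemma psi_f: "psi (f w $ 2 - X0 $ 2) (f w $ 3 - X0 $ 3) = w"
  using DD_nz unfolding f2 f3 psi_def
  by (simp add: complex_eq_iff field_simps) (simp add: DD_def algebra_simps power2_eq_square)

lemma f_psi2: "f (psi x y) $ 2 - X0 $ 2 = x"
  using DD_nz unfolding f2 psi_def
  by (simp add: field_simps) (simp add: DD_def algebra_simps power2_eq_square)
lemma f_psi3: "f (psi x y) $ 3 - X0 $ 3 = y"
  using DD_nz unfolding f3 psi_def
  by (simp add: field_simps) (simp add: DD_def algebra_simps power2_eq_square)

lemma bij_f: "bij (\<lambda>w. (f w $ 2 - X0 $ 2, f w $ 3 - X0 $ 3))"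
  by (rule o_bij[where g = "\<lambda>(x, y). psi x y"]) (auto simp: psi_f f_psi2 f_psi3)

lemma psi_L: "psi (Re z) (Im z) = Lpq (Complex ((Re c - 1) / (2 * DD)) (- Im c / (2 * DD)))
                                    (Complex (Im c / (2 * DD)) ((1 + Re c) / (2 * DD))) z"
  unfolding psi_def Lpq_def by (simp add: complex_eq_iff add_divide_distrib diff_divide_distrib algebra_simps)

lemma graph_f: "\<exists>A B :: real \<Rightarrow> real \<Rightarrow> real.
          smooth_fun (\<lambda>z. A (Re z) (Im z)) \<and> smooth_fun (\<lambda>z. B (Re z) (Im z))
        \<and> range f = {(vector [A x y, x + X0 $ 2, y + X0 $ 3, B x y] :: real ^ 4) | x y. True}"
proof (intro exI conjI)
  show "smooth_fun (\<lambda>z. f (psi (Re z) (Im z)) $ 1)"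
    unfolding psi_L f_comp by (rule smooth_ReL[OF GG_hol])
  show "smooth_fun (\<lambda>z. f (psi (Re z) (Im z)) $ 4)"
    unfolding psi_L f_comp by (rule smooth_ReL[OF GG_hol])
  show "range f = {(vector [f (psi x y) $ 1, x + X0 $ 2, y + X0 $ 3, f (psi x y) $ 4] :: real ^ 4) | x y. True}"
  proof (intro set_eqI iffI)
    fix v assume "v \<in> range f"
    then obtain w where v: "v = f w" by auto
    show "v \<in> {(vector [f (psi x y) $ 1, x + X0 $ 2, y + X0 $ 3, f (psi x y) $ 4] :: real ^ 4) | x y. True}"
      unfolding v
      by (rule CollectI, rule exI[of _ "f w $ 2 - X0 $ 2"], rule exI[of _ "f w $ 3 - X0 $ 3"])
         (simp add: psi_f vec_eq_iff forall_4)
  next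
    fix v assume "v \<in> {(vector [f (psi x y) $ 1, x + X0 $ 2, y + X0 $ 3, f (psi x y) $ 4] :: real ^ 4) | x y. True}"
    then obtain x y where v: "v = vector [f (psi x y) $ 1, x + X0 $ 2, y + X0 $ 3, f (psi x y) $ 4]" by auto
    have "v = f (psi x y)" unfolding v using f_psi2[of x y] f_psi3[of x y]
      by (simp add: vec_eq_iff forall_4)
    then show "v \<in> range f" by auto
  qed
qed

end



lemma quad3_zero:
  fixes e0 e1 e2 z1 z2 z3 :: complex
  assumes "z1 \<noteq> z2" "z2 \<noteq> z3" "z1 \<noteq> z3"
    and "e2 * z1^2 + e1 * z1 + e0 = 0" "e2 * z2^2 + e1 * z2 + e0 = 0" "e2 * z3^2 + e1 * z3 + e0 = 0"
  shows "e2 = 0 \<and> e1 = 0 \<and> e0 = 0"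
proof -
  have "(z1 - z2) * (e2 * (z1 + z2) + e1) = (e2 * z1^2 + e1 * z1 + e0) - (e2 * z2^2 + e1 * z2 + e0)"
    by (simp add: algebra_simps power2_eq_square)
  then have "(z1 - z2) * (e2 * (z1 + z2) + e1) = 0" using assms(4,5) by simp
  then have A: "e2 * (z1 + z2) + e1 = 0" using assms(1) by simp
  have "(z1 - z3) * (e2 * (z1 + z3) + e1) = (e2 * z1^2 + e1 * z1 + e0) - (e2 * z3^2 + e1 * z3 + e0)"
    by (simp add: algebra_simps power2_eq_square)
  then have "(z1 - z3) * (e2 * (z1 + z3) + e1) = 0" using assms(4,6) by simp
  then have B: "e2 * (z1 + z3) + e1 = 0" using assms(3) by simp
  have "e2 * (z2 - z3) = (e2 * (z1 + z2) + e1) - (e2 * (z1 + z3) + e1)" by (simp add: algebra_simps)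
  then have "e2 * (z2 - z3) = 0" using A B by simp
  then have "e2 = 0" using assms(2) by simp
  then show ?thesis using A assms(4) by simp
qed

context setting begin

lemma range_a_infinite:
  assumes "\<nexists>k. \<forall>w. a w = k"
  shows "infinite (range a)"
proof
  assume fin: "finite (range a)"
  have "connected (range a)"
    by (rule connected_continuous_image) (use a_entire holomorphic_on_imp_continuous_on in auto)
  then have "range a = {} \<or> (\<exists>k. range a = {k})" using fin connected_finite_iff_sing by blast
  then show False using assms by auto
qed

lemma three_values:
  assumes "\<nexists>k. \<forall>w. a w = k"
  obtains w1 w2 w3 where "a w1 \<noteq> a w2" "a w2 \<noteq> a w3" "a w1 \<noteq> a w3"
proof -
  obtain B where B: "finite B" "card B = 3" "B \<subseteq> range a"
    using infinite_arbitrarily_large[OF range_a_infinite[OF assms]] by blast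
  then obtain x y z where "B = {x, y, z}" "x \<noteq> y" "y \<noteq> z" "x \<noteq> z" using card_3_iff by metis
  with B(3) show ?thesis using that by auto
qed

lemma not_hyperplane:
  assumes nc: "\<nexists>k. \<forall>w. a w = k"
  shows "\<not> (\<exists>n d. n \<noteq> 0 \<and> (\<forall>w. n \<bullet> f w = d))"
proof
  assume "\<exists>n d. n \<noteq> 0 \<and> (\<forall>w. n \<bullet> f w = d)"
  then obtain n d where n0: "n \<noteq> 0" and nd: "\<And>w. n \<bullet> f w = d" by blast
  define H where "H z = of_real (n$1) * GG 1 z + of_real (n$2) * GG 2 z + of_real (n$3) * GG 3 z + of_real (n$4) * GG 4 z" for z
  have Hh: "H holomorphic_on UNIV" unfolding H_def using GG_hol by (auto intro!: holomorphic_intros)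
  have ReH: "(\<lambda>z. Re (H z)) = (\<lambda>z. d)"
  proof
    fix z
    have "n \<bullet> f z = Re (H z)" unfolding inner_vec_def sum_4 H_def by (simp add: f_comp)
    then show "Re (H z) = d" using nd by simp
  qed
  have dH: "deriv H z = 2 * (of_real (n$1) * hk 1 z + of_real (n$2) * hk 2 z + of_real (n$3) * hk 3 z + of_real (n$4) * hk 4 z)" for z
  proof -
    have "\<And>k. (GG k has_field_derivative 2 * hk k z) (at z)"
      using GG_hol dGG by (metis DERIV_deriv_iff_field_differentiable UNIV_I holomorphic_on_imp_differentiable_at open_UNIV)
    then have "(H has_field_derivative (of_real (n$1) * (2 * hk 1 z) + of_real (n$2) * (2 * hk 2 z) + of_real (n$3) * (2 * hk 3 z) + of_real (n$4) * (2 * hk 4 z))) (at z)"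
      unfolding H_def by (auto intro!: derivative_eq_intros)
    then show ?thesis by (subst DERIV_imp_deriv) (auto simp: algebra_simps)
  qed
  have pu0: "pu (\<lambda>z. d) w = 0" for w unfolding pu_def by simp
  have pv0: "pv (\<lambda>z. d) w = 0" for w unfolding pv_def by simp
  have d0: "deriv H w = 0" for w
  proof -
    have "Re (deriv H w) = 0" using pu0[of w] unfolding ReH[symmetric] pu_Re[OF Hh] .
    moreover have "Im (deriv H w) = 0" using pv0[of w] unfolding ReH[symmetric] pv_Re[OF Hh] by simp
    ultimately show ?thesis by (simp add: complex_eq_iff)
  qed
  define K where "K = of_real (n$2) * (1 + c) + of_real (n$3) * (\<i> * (1 - c))"
  have quad: "of_real (n$1 + n$4) * (a w)^2 + K * a w + of_real (n$1 - n$4) * c = 0" for w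
  proof -
    have "of_real (n$1) * hk 1 w + of_real (n$2) * hk 2 w + of_real (n$3) * hk 3 w + of_real (n$4) * hk 4 w = 0"
      using d0[of w] unfolding dH mult_eq_0_iff by simp
    then have "(of_real (n$1) * hk 1 w + of_real (n$2) * hk 2 w + of_real (n$3) * hk 3 w + of_real (n$4) * hk 4 w) * a w = 0"
      by simp
    then show ?thesis using a_nz unfolding hk_def K_def
      by (simp add: algebra_simps power2_eq_square)
  qed
  obtain w1 w2 w3 where "a w1 \<noteq> a w2" "a w2 \<noteq> a w3" "a w1 \<noteq> a w3" using three_values[OF nc] by blast
  from quad3_zero[OF this quad quad quad]
  have z: "n$1 + n$4 = 0" "K = 0" "of_real (n$1 - n$4) * c = 0"
    by (simp_all del: of_real_add of_real_diff)
  have c0: "c \<noteq> 0" using c_ne by simp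
  have n14: "n$1 = 0" "n$4 = 0" using z(1) z(3) c0 by auto
  have e1: "n$2 * (1 + Re c) + n$3 * Im c = 0" and e2: "n$2 * Im c + n$3 * (1 - Re c) = 0"
    using z(2) unfolding K_def by (simp_all add: complex_eq_iff algebra_simps)
  have D: "1 - (Re c)^2 - (Im c)^2 \<noteq> 0" using c_abs by simp
  have "n$2 * (1 - (Re c)^2 - (Im c)^2) = (1 - Re c) * (n$2 * (1 + Re c) + n$3 * Im c) - Im c * (n$2 * Im c + n$3 * (1 - Re c))"
    by (simp add: algebra_simps power2_eq_square)
  then have n2: "n$2 = 0" using e1 e2 D by simp
  have "n$3 * (1 - (Re c)^2 - (Im c)^2) = (1 + Re c) * (n$2 * Im c + n$3 * (1 - Re c)) - Im c * (n$2 * (1 + Re c) + n$3 * Im c)"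
    by (simp add: algebra_simps power2_eq_square)
  then have n3: "n$3 = 0" using e1 e2 D by simp
  have "n = 0" using n14 n2 n3 by (simp add: vec_eq_iff forall_4)
  then show False using n0 by simp
qed

end



context setting begin

definition gl :: "complex \<Rightarrow> complex" where
  "gl = (SOME g. g holomorphic_on UNIV \<and> (\<forall>z. a z = exp (g z)))"

lemma gl_prop: "gl holomorphic_on UNIV" "a z = exp (gl z)"
proof -
  have "\<exists>g. g holomorphic_on UNIV \<and> (\<forall>z. a z = exp (g z))"
  proof -
    have nz: "\<And>z. z \<in> UNIV \<Longrightarrow> a z \<noteq> 0" using a_nz by blast
    obtain g where g: "g holomorphic_on UNIV" "\<And>z. z \<in> UNIV \<Longrightarrow> a z = exp (g z)"
      using contractible_imp_holomorphic_log[OF a_entire contractible_UNIV nz] by blast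
    then show ?thesis by blast
  qed
  then have "gl holomorphic_on UNIV \<and> (\<forall>z. a z = exp (gl z))" unfolding gl_def by (rule someI_ex)
  then show "gl holomorphic_on UNIV" "a z = exp (gl z)" by blast+
qed

definition mm where "mm = (Re c)^2 + (Im c)^2"
definition k0 where "k0 = 2 + 2 * mm"
definition PQ :: "real \<Rightarrow> real" where "PQ s = Re c * cos (2 * s) + Im c * sin (2 * s)"
definition QQ :: "real \<Rightarrow> real" where "QQ s = Re c * sin (2 * s) - Im c * cos (2 * s)"
definition FF :: "real \<Rightarrow> real" where "FF s = k0 - 4 * PQ s"

lemma sq_id: "((x::real) * C + y * S)^2 + (x * S - y * C)^2 = (x^2 + y^2) * (S^2 + C^2)"
  by (simp add: power2_eq_square algebra_simps)

lemma PQ_sq: "(PQ s)^2 + (QQ s)^2 = mm"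
  unfolding PQ_def QQ_def mm_def sq_id by simp

lemma mm_ne1: "mm \<noteq> 1" using c_abs unfolding mm_def .
lemma mm_pos: "mm > 0"
proof -
  have "c \<noteq> 0" using c_ne by simp
  then have "Re c \<noteq> 0 \<or> Im c \<noteq> 0" by (simp add: complex_eq_iff)
  then show ?thesis unfolding mm_def by (simp add: sum_power2_gt_zero_iff)
qed

lemma FF_pos: "FF s > 0"
proof (cases "PQ s \<le> 0")
  case True then show ?thesis using mm_pos unfolding FF_def k0_def by simp
next
  case False
  have P2: "(PQ s)^2 \<le> mm" using PQ_sq[of s] by (metis le_add_same_cancel1 zero_le_power2)
  have "4 * PQ s < 2 + 2 * mm"
  proof (rule ccontr)
    assume "\<not> 4 * PQ s < 2 + 2 * mm"
    then have "2 + 2 * mm \<le> 4 * PQ s" by simp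
    then have "(2 + 2 * mm)^2 \<le> (4 * PQ s)^2" using mm_pos by (intro power_mono) auto
    also have "\<dots> = 16 * (PQ s)^2" by (simp add: power2_eq_square)
    also have "\<dots> \<le> 16 * mm" using P2 by simp
    finally have "(2 + 2 * mm)^2 - 16 * mm \<le> 0" by simp
    moreover have "(2 + 2 * mm)^2 - 16 * mm = 4 * (1 - mm)^2" by (simp add: power2_eq_square algebra_simps)
    moreover have "(1 - mm)^2 > 0" using mm_ne1 by simp
    ultimately show False by simp
  qed
  then show ?thesis unfolding FF_def k0_def by simp
qed

lemma Rv_FF: "Rv z = FF (Im (gl z))"
proof -
  have "a z * cnj (c / a z) = cnj c * (exp (gl z) / exp (cnj (gl z)))"
    using a_nz gl_prop(2)[of z] by (simp add: exp_cnj[symmetric])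
  also have "exp (gl z) / exp (cnj (gl z)) = exp (\<i> * of_real (2 * Im (gl z)))"
  proof -
    have "gl z - cnj (gl z) = \<i> * of_real (2 * Im (gl z))" by (simp add: complex_eq_iff)
    then show ?thesis by (metis exp_diff)
  qed
  finally have e: "a z * cnj (c / a z) = cnj c * exp (\<i> * of_real (2 * Im (gl z)))" .
  have "Re (a z * cnj (c / a z)) = PQ (Im (gl z))"
    unfolding e PQ_def by (simp add: Re_exp Im_exp)
  moreover have "(cmod c)^2 = mm" unfolding mm_def by (simp add: cmod_power2)
  ultimately show ?thesis unfolding Rv_eq FF_def k0_def by simp
qed

definition Lf :: "real \<Rightarrow> real" where "Lf s = (ln 2 + ln (FF s)) / 2"
definition Lf1 :: "real \<Rightarrow> real" where "Lf1 s = 4 * QQ s / FF s"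
definition Lf2 :: "real \<Rightarrow> real" where "Lf2 s = 8 * (k0 * PQ s - 4 * mm) / (FF s)^2"

lemma dPQ: "(PQ has_real_derivative (-2 * QQ s)) (at s)"
  unfolding PQ_def QQ_def by (auto intro!: derivative_eq_intros simp: algebra_simps)
lemma dQQ: "(QQ has_real_derivative (2 * PQ s)) (at s)"
  unfolding PQ_def QQ_def by (auto intro!: derivative_eq_intros simp: algebra_simps)
lemma dFF: "(FF has_real_derivative (8 * QQ s)) (at s)"
  unfolding FF_def using dPQ[of s] by (auto intro!: derivative_eq_intros)

lemma dLf: "(Lf has_real_derivative Lf1 s) (at s)"
proof -
  have "((\<lambda>s. (ln 2 + ln (FF s)) / 2) has_real_derivative (0 + 8 * QQ s / FF s) / 2) (at s)"
    using dFF[of s] FF_pos[of s] by (auto intro!: derivative_eq_intros)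
  then show ?thesis unfolding Lf_def[abs_def] Lf1_def by simp
qed

lemma dLf1: "(Lf1 has_real_derivative Lf2 s) (at s)"
proof -
  have "((\<lambda>s. 4 * QQ s / FF s) has_real_derivative (4 * (2 * PQ s) * FF s - 4 * QQ s * (8 * QQ s)) / (FF s * FF s)) (at s)"
    using dFF[of s] dQQ[of s] FF_pos[of s] by (auto intro!: derivative_eq_intros simp: power2_eq_square)
  moreover have "(4 * (2 * PQ s) * FF s - 4 * QQ s * (8 * QQ s)) / (FF s * FF s) = Lf2 s"
  proof -
    have "4 * (2 * PQ s) * FF s - 4 * QQ s * (8 * QQ s) = 8 * (k0 * PQ s - 4 * ((PQ s)^2 + (QQ s)^2))"
      unfolding FF_def by (simp add: algebra_simps power2_eq_square)
    then show ?thesis unfolding Lf2_def PQ_sq by (simp add: power2_eq_square)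
  qed
  ultimately show ?thesis unfolding Lf1_def[abs_def] by simp
qed

lemma conf_eq: "conf_factor f z = sqrt (2 * FF (Im (gl z)))"
  unfolding conf_factor_def lor_cnj Rv_FF by simp

lemma ln_conf: "(\<lambda>z. ln (conf_factor f z)) = (\<lambda>z. Lf (Im (gl z)))"
proof
  fix z
  have p: "FF (Im (gl z)) > 0" by (rule FF_pos)
  show "ln (conf_factor f z) = Lf (Im (gl z))"
    unfolding conf_eq Lf_def using p by (simp add: ln_sqrt ln_mult)
qed

lemma dgl_hol: "deriv gl holomorphic_on UNIV" using gl_prop(1) holomorphic_deriv by blast

lemma gauss_formula:
  "gauss_curv f w = - (Lf2 (Im (gl w)) * (cmod (deriv gl w))^2) / (2 * FF (Im (gl w)))"
proof -
  have pu1: "pu (\<lambda>z. Lf (Im (gl z))) = (\<lambda>z. Lf1 (Im (gl z)) * Im (deriv gl z))"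
    by (rule ext, rule ldu_pu, rule ldu_chain[OF ldu_Im[OF gl_prop(1)] dLf])
  have pv1: "pv (\<lambda>z. Lf (Im (gl z))) = (\<lambda>z. Lf1 (Im (gl z)) * Re (deriv gl z))"
    by (rule ext, rule ldv_pv, rule ldv_chain[OF ldv_Im[OF gl_prop(1)] dLf])
  have pu2: "pu (\<lambda>z. Lf1 (Im (gl z)) * Im (deriv gl z)) w =
      Lf2 (Im (gl w)) * Im (deriv gl w) * Im (deriv gl w) + Lf1 (Im (gl w)) * Im (deriv (deriv gl) w)"
    by (rule ldu_pu, rule ldu_mult[OF ldu_chain[OF ldu_Im[OF gl_prop(1)] dLf1] ldu_Im[OF dgl_hol]])
  have pv2: "pv (\<lambda>z. Lf1 (Im (gl z)) * Re (deriv gl z)) w =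
      Lf2 (Im (gl w)) * Re (deriv gl w) * Re (deriv gl w) + Lf1 (Im (gl w)) * (- Im (deriv (deriv gl) w))"
    by (rule ldv_pv, rule ldv_mult[OF ldv_chain[OF ldv_Im[OF gl_prop(1)] dLf1] ldv_Re[OF dgl_hol]])
  have cf: "(conf_factor f w)^2 = 2 * FF (Im (gl w))"
    unfolding conf_eq using FF_pos[of "Im (gl w)"] by simp
  have cm: "(cmod (deriv gl w))^2 = (Re (deriv gl w))^2 + (Im (deriv gl w))^2" by (simp add: cmod_power2)
  show ?thesis
    unfolding gauss_curv_def ln_conf pu1 pv1 pu2 pv2 cf cm
    by (simp add: cmod_power2 algebra_simps power2_eq_square)
qed

end



context setting begin

lemma exists_dgl:
  assumes nc: "\<nexists>k. \<forall>w. a w = k"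
  shows "\<exists>w0. deriv gl w0 \<noteq> 0"
proof (rule ccontr)
  assume "\<not> (\<exists>w0. deriv gl w0 \<noteq> 0)"
  then have z: "\<And>x. deriv gl x = 0" by simp
  have "\<And>x. x \<in> UNIV \<Longrightarrow> (gl has_field_derivative 0) (at x within UNIV)"
    using gl_prop(1) z by (metis DERIV_deriv_iff_field_differentiable UNIV_I holomorphic_on_imp_differentiable_at open_UNIV)
  then obtain k where "\<forall>x\<in>UNIV. gl x = k" using has_field_derivative_zero_constant[OF convex_UNIV] by blast
  then have "\<forall>w. a w = exp k" using gl_prop(2) by simp
  then show False using nc by blast
qed

lemma gauss_nz:
  assumes "deriv gl w \<noteq> 0" "k0 * PQ (Im (gl w)) \<noteq> 4 * mm"
  shows "gauss_curv f w \<noteq> 0"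
proof -
  have F: "FF (Im (gl w)) > 0" by (rule FF_pos)
  have L: "Lf2 (Im (gl w)) \<noteq> 0" unfolding Lf2_def using assms(2) F by simp
  have "(cmod (deriv gl w))^2 \<noteq> 0" using assms(1) by simp
  then show ?thesis unfolding gauss_formula using L F by simp
qed

lemma k0_pos: "k0 > 0" unfolding k0_def using mm_pos by simp

lemma QQ_nz:
  assumes "k0 * PQ s = 4 * mm"
  shows "QQ s \<noteq> 0"
proof
  assume q: "QQ s = 0"
  then have P2: "(PQ s)^2 = mm" using PQ_sq[of s] by simp
  have "(k0 * PQ s)^2 = (4 * mm)^2" using assms by simp
  moreover have "(k0 * PQ s)^2 = k0^2 * (PQ s)^2" by (simp add: power_mult_distrib)
  ultimately have "k0^2 * mm = (4 * mm)^2" using P2 by (simp only:)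
  also have "\<dots> = 16 * mm * mm" by (simp add: power2_eq_square)
  finally have "k0^2 * mm = 16 * mm * mm" .
  then have "mm * (k0^2 - 16 * mm) = 0" by (simp add: algebra_simps)
  then have "k0^2 = 16 * mm" using mm_pos by simp
  then have "4 * (1 - mm)^2 = 0" unfolding k0_def by (simp add: power2_eq_square algebra_simps)
  then show False using mm_ne1 by simp
qed

lemma gauss_exists:
  assumes nc: "\<nexists>k. \<forall>w. a w = k"
  shows "\<exists>w. gauss_curv f w \<noteq> 0"
proof -
  obtain w0 where w0: "deriv gl w0 \<noteq> 0" using exists_dgl[OF nc] by blast
  have "continuous (at w0) (deriv gl)"
    using dgl_hol holomorphic_on_imp_continuous_on continuous_on_eq_continuous_at open_UNIV by blast
  then obtain e where e: "e > 0" "\<And>y. dist w0 y < e \<Longrightarrow> deriv gl y \<noteq> 0"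
    using continuous_at_avoid[of w0 "deriv gl" 0] w0 by blast
  show ?thesis
  proof (cases "k0 * PQ (Im (gl w0)) = 4 * mm")
    case False
    then show ?thesis using gauss_nz w0 by blast
  next
    case True
    have Q0: "QQ (Im (gl w0)) \<noteq> 0" using QQ_nz[OF True] .
    have key: "\<exists>w. dist w0 w < e \<and> PQ (Im (gl w)) \<noteq> PQ (Im (gl w0))"
    proof (cases "Im (deriv gl w0) = 0")
      case False
      have d: "ldu (\<lambda>z. PQ (Im (gl z))) w0 (-2 * QQ (Im (gl w0)) * Im (deriv gl w0))"
        by (rule ldu_chain[OF ldu_Im[OF gl_prop(1)] dPQ])
      have nz: "-2 * QQ (Im (gl w0)) * Im (deriv gl w0) \<noteq> 0" using False Q0 by simp
      have "\<not> (\<forall>y. \<bar>0 - y\<bar> < e \<longrightarrow> PQ (Im (gl (w0 + of_real 0))) = PQ (Im (gl (w0 + of_real y))))"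
        using DERIV_local_const[OF d[unfolded ldu_def] e(1)] nz by blast
      then obtain y where "\<bar>y\<bar> < e" "PQ (Im (gl w0)) \<noteq> PQ (Im (gl (w0 + of_real y)))" by auto
      then show ?thesis by (intro exI[of _ "w0 + of_real y"]) (auto simp: dist_norm)
    next
      case True
      then have R: "Re (deriv gl w0) \<noteq> 0" using w0 by (simp add: complex_eq_iff)
      have d: "ldv (\<lambda>z. PQ (Im (gl z))) w0 (-2 * QQ (Im (gl w0)) * Re (deriv gl w0))"
        by (rule ldv_chain[OF ldv_Im[OF gl_prop(1)] dPQ])
      have nz: "-2 * QQ (Im (gl w0)) * Re (deriv gl w0) \<noteq> 0" using R Q0 by simp
      have "\<not> (\<forall>y. \<bar>0 - y\<bar> < e \<longrightarrow> PQ (Im (gl (w0 + \<i> * of_real 0))) = PQ (Im (gl (w0 + \<i> * of_real y))))"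
        using DERIV_local_const[OF d[unfolded ldv_def] e(1)] nz by blast
      then obtain y where "\<bar>y\<bar> < e" "PQ (Im (gl w0)) \<noteq> PQ (Im (gl (w0 + \<i> * of_real y)))" by auto
      then show ?thesis by (intro exI[of _ "w0 + \<i> * of_real y"]) (auto simp: dist_norm norm_mult)
    qed
    then obtain w where w: "dist w0 w < e" "PQ (Im (gl w)) \<noteq> PQ (Im (gl w0))" by blast
    have "k0 * PQ (Im (gl w)) \<noteq> 4 * mm"
    proof
      assume "k0 * PQ (Im (gl w)) = 4 * mm"
      then have "k0 * PQ (Im (gl w)) = k0 * PQ (Im (gl w0))" using True by simp
      then show False using w(2) k0_pos by simp
    qed
    then show ?thesis using gauss_nz e(2)[OF w(1)] by blast
  qed
qed

end

theorem theorem4p5: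
  fixes a :: "complex \<Rightarrow> complex" and c :: complex and X0 :: "real ^ 4"
    and f :: "complex \<Rightarrow> real ^ 4"
  assumes a_entire: "a holomorphic_on UNIV"
    and a_nz: "\<forall>w. a w \<noteq> 0"
    and c_ne: "c \<notin> {0, 1, -1}"
    and c_abs: "(Re c)^2 + (Im c)^2 \<noteq> 1"
    and f_def: "\<forall>w. f w = X0 + 2 *\<^sub>R (\<chi> k. Re (contour_integral (linepath 0 w)
                 (\<lambda>\<xi>. (vector [a \<xi> + c / a \<xi>, 1 + c, \<i> * (1 - c), a \<xi> - c / a \<xi>] :: complex ^ 4) $ k)))"
  shows "conformal f \<and> minimal f \<and> spacelike_immersion f
    \<and> (\<forall>w. fw f w = Wv (a w) (c / a w))
    \<and> (\<forall>w. f w $ 2 - X0 $ 2 = 2 * ((1 + Re c) * Re w - Im c * Im w)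
         \<and> f w $ 3 - X0 $ 3 = 2 * (Im c * Re w + (Re c - 1) * Im w))
    \<and> bij (\<lambda>w. (f w $ 2 - X0 $ 2, f w $ 3 - X0 $ 3))
    \<and> (\<exists>A B :: real \<Rightarrow> real \<Rightarrow> real.
          smooth_fun (\<lambda>z. A (Re z) (Im z)) \<and> smooth_fun (\<lambda>z. B (Re z) (Im z))
        \<and> range f = {(vector [A x y, x + X0 $ 2, y + X0 $ 3, B x y] :: real ^ 4) | x y. True})
    \<and> ((\<nexists>k. \<forall>w. a w = k) \<longrightarrow>
          (\<exists>w. gauss_curv f w \<noteq> 0)
        \<and> \<not> (\<exists>n d. n \<noteq> 0 \<and> (\<forall>w. n \<bullet> f w = d)))"
  proof -
  interpret S: setting a c X0 f
    by unfold_locales (use assms in auto)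
  show ?thesis
  proof (intro conjI allI impI)
    show "conformal f" by (rule S.conformal_f)
    show "minimal f" by (rule S.minimal_f)
    show "spacelike_immersion f" by (rule S.spacelike_f)
  qed (use S.fw_eq S.f2 S.f3 S.bij_f S.graph_f S.gauss_exists S.not_hyperplane in \<open>simp_all\<close>)
qed

end
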